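(* For every $k>0$ and all $m$-dimensional bodies $A_1,A_2$, $\delta_k(A_1\cup A_2)+\delta_k(A_1\cap A_2)\ge\delta_k(A_1)+\delta_k(A_2)$.
   Context: An $m$-dimensional body is a compact subset of $\mathbb R_+^m$. For $k>0$, its $k$-deficiency is $\delta_k(A)=|A|-k\sum_{j=1}^m|A_{[m]\setminus\{j\}}|$, where $A_{[m]\setminus\{j\}}=\{\mathbf x_{-j}:\mathbf x\in A\}\subseteq\mathbb R^{m-1}$ is the projection deleting coordinate $j$ and $|\cdot|$ denotes Lebesgue measure of the relevant dimension. *)

theory Defs
  imports "HOL-Analysis.Analysis"
begin

text \<open>Points of R^m are modelled as functions nat => real that are extensional
  on the index set {..<m} (coordinates 0,...,m-1). Lebesgue measure on R^I is the
  product measure PiM I (%_. lborel). Bodies are compact (product topology on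
  nat => real, which agrees with the Euclidean topology on the m-dimensional part).\<close>

definition body :: "nat \<Rightarrow> (nat \<Rightarrow> real) set \<Rightarrow> bool" where
  "body m A \<longleftrightarrow> compact A \<and>
     A \<subseteq> {x. x \<in> extensional {..<m} \<and> (\<forall>i<m. 0 \<le> x i)}"

definition proj_del :: "nat \<Rightarrow> nat \<Rightarrow> (nat \<Rightarrow> real) set \<Rightarrow> (nat \<Rightarrow> real) set" where
  "proj_del m j A = (\<lambda>x. restrict x ({..<m} - {j})) ` A"

definition deficiency :: "nat \<Rightarrow> real \<Rightarrow> (nat \<Rightarrow> real) set \<Rightarrow> real" where
  "deficiency m k A =
     measure (PiM {..<m} (\<lambda>_. lborel)) A
     - k * (\<Sum>j<m. measure (PiM ({..<m} - {j}) (\<lambda>_. lborel)) (proj_del m j A))"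

end

theory Submission
  imports Defs
begin

lemma id_meas:
  fixes I :: "nat set"
  shows "(\<lambda>x::nat\<Rightarrow>real. x) \<in> measurable (PiM I (\<lambda>_. lborel)) (PiM UNIV (\<lambda>_. borel))"
proof -
  have comp: "(\<lambda>x::nat\<Rightarrow>real. x i) \<in> measurable (PiM I (\<lambda>_. lborel)) borel" for i
  proof (cases "i \<in> I")
    case True
    have "(\<lambda>x::nat\<Rightarrow>real. x i) \<in> measurable (PiM I (\<lambda>_. lborel)) lborel"
      by (rule measurable_component_singleton[OF True])
    then show ?thesis by (simp only: measurable_lborel1)
  next
    case False
    have eq: "x i = undefined" if "x \<in> space (PiM I (\<lambda>_. lborel))" for x :: "nat \<Rightarrow> real"
      using that False unfolding space_PiM PiE_def extensional_def by blast
    show ?thesis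
      by (rule measurable_cong[THEN iffD2, OF eq measurable_const]) simp_all
  qed
  have sp: "(\<lambda>x::nat\<Rightarrow>real. \<lambda>i. x i) \<in> space (PiM I (\<lambda>_. lborel)) \<rightarrow> (PiE UNIV (\<lambda>i. space (borel::real measure)))"
    by (simp add: PiE_UNIV_domain)
  show ?thesis
    using measurable_PiM_single'[where f="\<lambda>i (x::nat\<Rightarrow>real). x i" and I=UNIV and N="PiM I (\<lambda>_. lborel)" and M="\<lambda>_. borel::real measure", OF comp sp]
    by simp
qed

lemma compact_sets:
  fixes C :: "(nat \<Rightarrow> real) set"
  assumes "compact C" "C \<subseteq> extensional I"
  shows "C \<in> sets (PiM I (\<lambda>_. lborel))"
proof -
  have "C \<in> sets (borel :: (nat \<Rightarrow> real) measure)"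
    using assms(1) by (simp add: borel_closed compact_imp_closed)
  then have "C \<in> sets (PiM UNIV (\<lambda>_::nat. borel::real measure))"
    by (subst sets_PiM_equal_borel)
  then have "(\<lambda>x. x) -` C \<inter> space (PiM I (\<lambda>_. lborel)) \<in> sets (PiM I (\<lambda>_. lborel))"
    by (rule measurable_sets[OF id_meas])
  moreover have "(\<lambda>x. x) -` C \<inter> space (PiM I (\<lambda>_. lborel)) = C"
    using assms(2) by (auto simp: space_PiM PiE_def)
  ultimately show ?thesis by simp
qed

lemma compact_fmeas:
  fixes C :: "(nat \<Rightarrow> real) set"
  assumes "finite I" "compact C" "C \<subseteq> extensional I"
  shows "C \<in> fmeasurable (PiM I (\<lambda>_. lborel))"
proof (rule fmeasurableI)
  interpret product_sigma_finite "\<lambda>_. lborel" by standard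
  show S: "C \<in> sets (PiM I (\<lambda>_. lborel))" using compact_sets assms by blast
  have "\<forall>i. \<exists>B. \<forall>x\<in>C. \<bar>x i\<bar> \<le> B"
  proof
    fix i
    have "continuous_on C (\<lambda>x::nat\<Rightarrow>real. x i)"
      by (rule continuous_on_subset[OF continuous_on_product_coordinates]) simp
    then have "compact ((\<lambda>x. x i) ` C)" using assms(2) compact_continuous_image by blast
    then have "bounded ((\<lambda>x. x i) ` C)" by (rule compact_imp_bounded)
    then show "\<exists>B. \<forall>x\<in>C. \<bar>x i\<bar> \<le> B" by (auto simp: bounded_iff)
  qed
  then obtain B where B: "\<And>i x. x \<in> C \<Longrightarrow> \<bar>x i\<bar> \<le> B i" by metis
  have sub: "C \<subseteq> PiE I (\<lambda>i. {-B i..B i})"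
  proof
    fix x assume x: "x \<in> C"
    have "\<And>i. - B i \<le> x i \<and> x i \<le> B i" using B[OF x] by (meson abs_le_iff minus_le_iff)
    then show "x \<in> PiE I (\<lambda>i. {-B i..B i})" using x assms(3) by (auto simp: PiE_def)
  qed
  have "emeasure (PiM I (\<lambda>_. lborel)) C \<le> emeasure (PiM I (\<lambda>_. lborel)) (PiE I (\<lambda>i. {-B i..B i}))"
    by (rule emeasure_mono[OF sub], rule sets_PiM_I_finite[OF assms(1)]) simp
  also have "\<dots> = (\<Prod>i\<in>I. emeasure lborel {-B i..B i})"
    by (rule emeasure_PiM[OF assms(1)]) simp
  also have "\<dots> < \<infinity>" by (simp add: top.not_eq_extremum[symmetric] ennreal_prod_eq_top emeasure_lborel_Icc_eq)
  finally show "emeasure (PiM I (\<lambda>_. lborel)) C < \<infinity>" .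
qed

lemma proj_compact:
  assumes "compact A"
  shows "compact (proj_del m j A)" "proj_del m j A \<subseteq> extensional ({..<m} - {j})"
proof -
  have "continuous_on A (\<lambda>x::nat\<Rightarrow>real. restrict x ({..<m} - {j}))"
  proof (rule continuous_on_coordinatewise_then_product)
    fix i
    show "continuous_on A (\<lambda>x::nat\<Rightarrow>real. restrict x ({..<m} - {j}) i)"
    proof (cases "i \<in> {..<m} - {j}")
      case True
      then show ?thesis
        using continuous_on_subset[OF continuous_on_product_coordinates[of i], of A] by simp
    next
      case False
      then have "(\<lambda>x::nat\<Rightarrow>real. restrict x ({..<m} - {j}) i) = (\<lambda>x. undefined)" by auto
      then show ?thesis by (simp only:) (rule continuous_on_const)
    qed
  qed
  then show "compact (proj_del m j A)"
    unfolding proj_del_def using assms compact_continuous_image by blast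
  show "proj_del m j A \<subseteq> extensional ({..<m} - {j})"
    unfolding proj_del_def by auto
qed

theorem lemma4:
  fixes m :: nat and k :: real and A1 A2 :: "(nat \<Rightarrow> real) set"
  assumes "m \<ge> 1" and "k > 0" and "body m A1" and "body m A2"
  shows "deficiency m k (A1 \<union> A2) + deficiency m k (A1 \<inter> A2)
           \<ge> deficiency m k A1 + deficiency m k A2"
proof -
  have c1: "compact A1" "A1 \<subseteq> extensional {..<m}" and c2: "compact A2" "A2 \<subseteq> extensional {..<m}"
    using assms(3,4) unfolding body_def by auto
  let ?M = "PiM {..<m} (\<lambda>_. lborel)"
  have f1: "A1 \<in> fmeasurable ?M" and f2: "A2 \<in> fmeasurable ?M"
    by (rule compact_fmeas[OF _ c1], simp) (rule compact_fmeas[OF _ c2], simp)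
  have main: "measure ?M (A1 \<union> A2) + measure ?M (A1 \<inter> A2) = measure ?M A1 + measure ?M A2"
    using measure_Un3[OF f1 f2] by simp
  have proj: "measure (PiM ({..<m} - {j}) (\<lambda>_. lborel)) (proj_del m j (A1 \<union> A2))
     + measure (PiM ({..<m} - {j}) (\<lambda>_. lborel)) (proj_del m j (A1 \<inter> A2))
     \<le> measure (PiM ({..<m} - {j}) (\<lambda>_. lborel)) (proj_del m j A1)
     + measure (PiM ({..<m} - {j}) (\<lambda>_. lborel)) (proj_del m j A2)" for j
  proof -
    let ?N = "PiM ({..<m} - {j}) (\<lambda>_. lborel)"
    have fin: "finite ({..<m} - {j})" by simp
    have p1: "proj_del m j A1 \<in> fmeasurable ?N"
      by (rule compact_fmeas[OF fin proj_compact[OF c1(1)]])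
    have p2: "proj_del m j A2 \<in> fmeasurable ?N"
      by (rule compact_fmeas[OF fin proj_compact[OF c2(1)]])
    have pi: "proj_del m j (A1 \<inter> A2) \<in> sets ?N"
      by (rule compact_sets[OF proj_compact[OF compact_Int[OF c1(1) c2(1)]]])
    have un: "proj_del m j (A1 \<union> A2) = proj_del m j A1 \<union> proj_del m j A2"
      unfolding proj_del_def by auto
    have "proj_del m j (A1 \<inter> A2) \<subseteq> proj_del m j A1 \<inter> proj_del m j A2"
      unfolding proj_del_def by auto
    then have "measure ?N (proj_del m j (A1 \<inter> A2)) \<le> measure ?N (proj_del m j A1 \<inter> proj_del m j A2)"
      by (rule measure_mono_fmeasurable[OF _ pi fmeasurable_Int_fmeasurable[OF p1 fmeasurableD[OF p2]]])
    then show ?thesis using measure_Un3[OF p1 p2] un by simp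
  qed
  have "(\<Sum>j<m. measure (PiM ({..<m} - {j}) (\<lambda>_. lborel)) (proj_del m j (A1 \<union> A2)))
      + (\<Sum>j<m. measure (PiM ({..<m} - {j}) (\<lambda>_. lborel)) (proj_del m j (A1 \<inter> A2)))
      \<le> (\<Sum>j<m. measure (PiM ({..<m} - {j}) (\<lambda>_. lborel)) (proj_del m j A1))
      + (\<Sum>j<m. measure (PiM ({..<m} - {j}) (\<lambda>_. lborel)) (proj_del m j A2))"
    unfolding sum.distrib[symmetric] by (rule sum_mono) (rule proj)
  then have "k * ((\<Sum>j<m. measure (PiM ({..<m} - {j}) (\<lambda>_. lborel)) (proj_del m j (A1 \<union> A2)))
      + (\<Sum>j<m. measure (PiM ({..<m} - {j}) (\<lambda>_. lborel)) (proj_del m j (A1 \<inter> A2))))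
      \<le> k * ((\<Sum>j<m. measure (PiM ({..<m} - {j}) (\<lambda>_. lborel)) (proj_del m j A1))
      + (\<Sum>j<m. measure (PiM ({..<m} - {j}) (\<lambda>_. lborel)) (proj_del m j A2)))"
    using assms(2) by (intro mult_left_mono) auto
  then show ?thesis using main unfolding deficiency_def by (simp add: algebra_simps)
qed

end
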